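(* Let $d\ge3$, let $P$ be a probability measure on $\mathbb{R}^d$ and $f\in L^2(P)$. Suppose: (i) there is $\bar c>0$ such that for every $m\in\mathbb N$ and every two-layer network $f_m({\bm x})=\sum_{i=1}^m a_i\sigma({\bm w}_i^T\tilde{\bm x})$ with $m$ neurons, $\|f-f_m\|_{L^2(P)}\ge\bar c\,m^{-1/(d-1)}$; (ii) there is $C>0$ such that for every Barron function $g$ and every $m\in\mathbb N$ there is a two-layer network $f_m$ with $m$ neurons satisfying $\|g-f_m\|_{L^2(P)}\le C\|g\|_{\mathcal B}/\sqrt m$. Then there is a constant $c_d>0$ depending only on $\bar c$, $C$ and $d$ such that for every $\varepsilon\in(0,\bar c/4]$ and every Barron function $\tilde f$ with $\|f-\tilde f\|_{L^2(P)}<\varepsilon$, \[ \|\tilde f\|_{\mathcal B}\ge c_d\,\varepsilon^{-\frac{d-3}{2}}. \]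
   Context: $\sigma(z)=\max(z,0)$, $\tilde{\bm x}=({\bm x}^T,1)^T$. A Barron function is $g({\bm x})=\mathbb{E}_{(a,{\bm w})\sim\rho}[a\sigma({\bm w}^T\tilde{\bm x})]$ for a probability measure $\rho$ on $\mathbb{R}\times\mathbb{R}^{d+1}$ with finite $\mathbb{E}_\rho[|a|\|{\bm w}\|_1]$; its Barron norm $\|g\|_{\mathcal B}$ is the infimum of $\mathbb{E}_\rho[|a|\|{\bm w}\|_1]$ over all such representations. *)

theory Defs
  imports "HOL-Probability.Probability"
begin

definition relu :: "real \<Rightarrow> real" where
  "relu z = max z 0"

text \<open>Weight vector w = (v, b) in R^(d+1) acts on x~ = (x,1) as v . x + b.
  Its l1 norm is the sum of absolute coordinates.\<close>
definition l1_weight :: "'a::euclidean_space \<times> real \<Rightarrow> real" where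
  "l1_weight w = (\<Sum>i\<in>Basis. \<bar>fst w \<bullet> i\<bar>) + \<bar>snd w\<bar>"

definition neuron :: "real \<times> ('a::euclidean_space \<times> real) \<Rightarrow> 'a \<Rightarrow> real" where
  "neuron p x = fst p * relu (fst (snd p) \<bullet> x + snd (snd p))"

definition two_layer_net :: "nat \<Rightarrow> (nat \<Rightarrow> real) \<Rightarrow> (nat \<Rightarrow> 'a::euclidean_space) \<Rightarrow> (nat \<Rightarrow> real) \<Rightarrow> 'a \<Rightarrow> real" where
  "two_layer_net m a v b x = (\<Sum>i<m. a i * relu (v i \<bullet> x + b i))"

definition barron_rep :: "(real \<times> ('a::euclidean_space \<times> real)) measure \<Rightarrow> ('a \<Rightarrow> real) \<Rightarrow> bool" where
  "barron_rep \<rho> g \<longleftrightarrow> prob_space \<rho> \<and> sets \<rho> = sets borel \<and>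
     integrable \<rho> (\<lambda>p. \<bar>fst p\<bar> * l1_weight (snd p)) \<and>
     (\<forall>x. g x = (\<integral>p. neuron p x \<partial>\<rho>))"

definition barron_function :: "('a::euclidean_space \<Rightarrow> real) \<Rightarrow> bool" where
  "barron_function g \<longleftrightarrow> (\<exists>\<rho>. barron_rep \<rho> g)"

definition barron_norm :: "('a::euclidean_space \<Rightarrow> real) \<Rightarrow> real" where
  "barron_norm g = Inf {(\<integral>p. \<bar>fst p\<bar> * l1_weight (snd p) \<partial>\<rho>) | \<rho>. barron_rep \<rho> g}"

definition L2_norm :: "'a measure \<Rightarrow> ('a \<Rightarrow> real) \<Rightarrow> ennreal" where
  "L2_norm P h = (let I = (\<integral>\<^sup>+ x. ennreal ((h x)\<^sup>2) \<partial>P) in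
     if I = \<top> then \<top> else ennreal (sqrt (enn2real I)))"

definition in_L2 :: "'a measure \<Rightarrow> ('a \<Rightarrow> real) \<Rightarrow> bool" where
  "in_L2 P f \<longleftrightarrow> f \<in> borel_measurable P \<and> integrable P (\<lambda>x. (f x)\<^sup>2)"

end

theory Submission
  imports Defs
begin

lemma barron_meas:
  assumes "barron_rep \<rho> (g::'a::euclidean_space \<Rightarrow> real)"
  shows "g \<in> borel_measurable borel"
proof -
  have ps: "prob_space \<rho>" and sr: "sets \<rho> = sets borel" and g: "\<And>x. g x = (\<integral>p. neuron p x \<partial>\<rho>)"
    using assms unfolding barron_rep_def by auto
  interpret prob_space \<rho> by (rule ps)
  have c: "continuous_on UNIV (\<lambda>z::'a \<times> real \<times> 'a \<times> real. neuron (snd z) (fst z))"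
    unfolding neuron_def relu_def by (intro continuous_intros)
  have "(\<lambda>z::'a \<times> real \<times> 'a \<times> real. neuron (snd z) (fst z)) \<in> borel_measurable borel"
    by (rule borel_measurable_continuous_onI[OF c])
  hence "(\<lambda>z::'a \<times> real \<times> 'a \<times> real. neuron (snd z) (fst z)) \<in> borel_measurable (borel \<Otimes>\<^sub>M borel)"
    by (simp add: borel_prod)
  hence "(\<lambda>z::'a \<times> real \<times> 'a \<times> real. neuron (snd z) (fst z)) \<in> borel_measurable (borel \<Otimes>\<^sub>M \<rho>)"
    by (subst measurable_cong_sets[OF sets_pair_measure_cong[OF refl sr] refl])
  hence "case_prod (\<lambda>x p. neuron p x) \<in> borel_measurable (borel \<Otimes>\<^sub>M \<rho>)"
    by (simp add: case_prod_beta')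
  hence "(\<lambda>x. \<integral>p. neuron p x \<partial>\<rho>) \<in> borel_measurable borel"
    by (rule borel_measurable_lebesgue_integral)
  moreover have "g = (\<lambda>x. \<integral>p. neuron p x \<partial>\<rho>)" using g by auto
  ultimately show ?thesis by simp
qed

lemma L2_lt:
  assumes "L2_norm P h < ennreal e"
  shows "(\<integral>\<^sup>+ x. ennreal ((h x)\<^sup>2) \<partial>P) < ennreal (e\<^sup>2)"
proof -
  let ?I = "\<integral>\<^sup>+ x. ennreal ((h x)\<^sup>2) \<partial>P"
  have nt: "?I \<noteq> \<top>" and s: "ennreal (sqrt (enn2real ?I)) < ennreal e"
    using assms unfolding L2_norm_def Let_def by (auto split: if_splits)
  have e0: "e > 0" using s by (cases "e > 0") (auto simp: ennreal_neg)
  have "sqrt (enn2real ?I) < e" using s e0 by (simp add: ennreal_less_iff)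
  hence "(sqrt (enn2real ?I))\<^sup>2 < e\<^sup>2" by (intro power_strict_mono) auto
  hence "enn2real ?I < e\<^sup>2" by simp
  hence "ennreal (enn2real ?I) < ennreal (e\<^sup>2)" by (simp add: ennreal_less_iff)
  thus ?thesis using nt by (simp add: ennreal_enn2real_if)
qed

lemma L2_le:
  assumes "L2_norm P h \<le> ennreal r" "r \<ge> 0"
  shows "(\<integral>\<^sup>+ x. ennreal ((h x)\<^sup>2) \<partial>P) \<le> ennreal (r\<^sup>2)"
proof -
  let ?I = "\<integral>\<^sup>+ x. ennreal ((h x)\<^sup>2) \<partial>P"
  have nt: "?I \<noteq> \<top>" and s: "ennreal (sqrt (enn2real ?I)) \<le> ennreal r"
    using assms unfolding L2_norm_def Let_def by (auto split: if_splits simp: top_unique)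
  have "sqrt (enn2real ?I) \<le> r" using s assms(2) by (simp add: ennreal_le_iff)
  hence "enn2real ?I \<le> r\<^sup>2" by (simp add: real_sqrt_le_iff sqrt_le_D)
  hence "ennreal (enn2real ?I) \<le> ennreal (r\<^sup>2)" by (rule ennreal_leI)
  thus ?thesis using nt by (simp add: ennreal_enn2real_if)
qed

lemma L2_ge:
  assumes "ennreal c \<le> L2_norm P h" "c \<ge> 0" "(\<integral>\<^sup>+ x. ennreal ((h x)\<^sup>2) \<partial>P) \<noteq> \<top>"
  shows "ennreal (c\<^sup>2) \<le> (\<integral>\<^sup>+ x. ennreal ((h x)\<^sup>2) \<partial>P)"
proof -
  let ?I = "\<integral>\<^sup>+ x. ennreal ((h x)\<^sup>2) \<partial>P"
  have s: "ennreal c \<le> ennreal (sqrt (enn2real ?I))"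
    using assms unfolding L2_norm_def Let_def by (auto split: if_splits)
  have "c \<le> sqrt (enn2real ?I)" using s by (simp add: ennreal_le_iff)
  hence "c\<^sup>2 \<le> (sqrt (enn2real ?I))\<^sup>2" using assms(2) by (intro power_mono) auto
  hence "c\<^sup>2 \<le> enn2real ?I" by simp
  hence "ennreal (c\<^sup>2) \<le> ennreal (enn2real ?I)" by (rule ennreal_leI)
  thus ?thesis using assms(3) by (simp add: ennreal_enn2real_if)
qed

lemma L2_sum:
  assumes "u \<in> borel_measurable P" "v \<in> borel_measurable P"
  shows "(\<integral>\<^sup>+ x. ennreal ((u x + v x)\<^sup>2) \<partial>P) \<le>
    2 * (\<integral>\<^sup>+ x. ennreal ((u x)\<^sup>2) \<partial>P) + 2 * (\<integral>\<^sup>+ x. ennreal ((v x)\<^sup>2) \<partial>P)"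
proof -
  have "(\<integral>\<^sup>+ x. ennreal ((u x + v x)\<^sup>2) \<partial>P) \<le> (\<integral>\<^sup>+ x. (2 * ennreal ((u x)\<^sup>2) + 2 * ennreal ((v x)\<^sup>2)) \<partial>P)"
  proof (rule nn_integral_mono)
    fix x
    have "0 \<le> (u x - v x)\<^sup>2" by simp
    hence "(u x + v x)\<^sup>2 \<le> 2 * (u x)\<^sup>2 + 2 * (v x)\<^sup>2"
      by (simp add: power2_sum power2_diff)
    hence "ennreal ((u x + v x)\<^sup>2) \<le> ennreal (2 * (u x)\<^sup>2 + 2 * (v x)\<^sup>2)" by (rule ennreal_leI)
    also have "\<dots> = 2 * ennreal ((u x)\<^sup>2) + 2 * ennreal ((v x)\<^sup>2)"
      by (simp add: ennreal_plus ennreal_mult)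
    finally show "ennreal ((u x + v x)\<^sup>2) \<le> 2 * ennreal ((u x)\<^sup>2) + 2 * ennreal ((v x)\<^sup>2)" .
  qed
  also have "\<dots> = 2 * (\<integral>\<^sup>+ x. ennreal ((u x)\<^sup>2) \<partial>P) + 2 * (\<integral>\<^sup>+ x. ennreal ((v x)\<^sup>2) \<partial>P)"
    using assms by (simp add: nn_integral_add nn_integral_cmult)
  finally show ?thesis .
qed

lemma bn_nonneg: "barron_function g \<Longrightarrow> barron_norm g \<ge> 0"
  unfolding barron_function_def barron_norm_def
  by (auto intro!: cInf_greatest simp: mult_nonneg_nonneg l1_weight_def)

lemma net_meas: "two_layer_net m a v b \<in> borel_measurable (borel::'a::euclidean_space measure)"
  unfolding two_layer_net_def[abs_def] relu_def
  by (intro borel_measurable_continuous_onI continuous_intros)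

theorem mainTheorem6:
  fixes cbar C :: real
  assumes "DIM('a::euclidean_space) \<ge> 3" and "cbar > 0" and "C > 0"
  shows "\<exists>cd > 0. \<forall>(P :: 'a measure) (f :: 'a \<Rightarrow> real).
    prob_space P \<and> sets P = sets borel \<and> in_L2 P f \<and>
    (\<forall>m a v b. m \<ge> 1 \<longrightarrow>
       L2_norm P (\<lambda>x. f x - two_layer_net m a v b x)
         \<ge> ennreal (cbar * real m powr (- 1 / (real DIM('a) - 1)))) \<and>
    (\<forall>g. barron_function g \<longrightarrow> (\<forall>m. m \<ge> 1 \<longrightarrow> (\<exists>a v b.
       L2_norm P (\<lambda>x. g x - two_layer_net m a v b x)
         \<le> ennreal (C * barron_norm g / sqrt (real m)))))
    \<longrightarrow> (\<forall>\<epsilon> ft. 0 < \<epsilon> \<and> \<epsilon> \<le> cbar / 4 \<and> barron_function ft \<and>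
           L2_norm P (\<lambda>x. f x - ft x) < ennreal \<epsilon> \<longrightarrow>
           barron_norm ft \<ge> cd * \<epsilon> powr (- (real DIM('a) - 3) / 2))"
proof -
  define d where "d = real DIM('a)"
  have d3: "d \<ge> 3" using assms(1) unfolding d_def by simp
  define cd where "cd = (cbar/2) powr ((d-1)/2) / (sqrt 2 * C)"
  have cdpos: "cd > 0" unfolding cd_def using assms by simp
  show ?thesis
  proof (intro exI[of _ cd] conjI cdpos allI impI, elim conjE)
    fix P :: "'a measure" and f :: "'a \<Rightarrow> real" and \<epsilon> ft
    assume sP: "sets P = sets borel" and fL2: "in_L2 P f"
      and lower: "\<forall>m a v b. m \<ge> 1 \<longrightarrow>
       L2_norm P (\<lambda>x. f x - two_layer_net m a v b x)
         \<ge> ennreal (cbar * real m powr (- 1 / (real DIM('a) - 1)))"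
      and upper: "\<forall>g. barron_function g \<longrightarrow> (\<forall>m. m \<ge> 1 \<longrightarrow> (\<exists>a v b.
       L2_norm P (\<lambda>x. g x - two_layer_net m a v b x)
         \<le> ennreal (C * barron_norm g / sqrt (real m))))"
      and ep: "0 < \<epsilon>" and ep4: "\<epsilon> \<le> cbar / 4" and bf: "barron_function ft"
      and close: "L2_norm P (\<lambda>x. f x - ft x) < ennreal \<epsilon>"
    define B where "B = barron_norm ft"
    have B0: "B \<ge> 0" unfolding B_def using bf by (rule bn_nonneg)
    define q where "q = cbar / (2*\<epsilon>)"
    have q2: "q \<ge> 2" unfolding q_def using ep ep4 by (simp add: field_simps)
    define X where "X = q powr (d-1)"
    have "q powr 1 \<le> q powr (d-1)" by (rule powr_mono) (use d3 q2 in auto)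
    hence X2: "X \<ge> 2" unfolding X_def using q2 by simp
    define m where "m = nat \<lfloor>X\<rfloor>"
    have mX: "real m \<le> X" unfolding m_def using X2 by linarith
    have mX2: "real m \<ge> X / 2" unfolding m_def using X2 by linarith
    have m1: "m \<ge> 1" unfolding m_def using X2 by linarith
    have "X powr (-1/(d-1)) \<le> real m powr (-1/(d-1))"
      by (rule powr_mono2') (use d3 m1 mX in auto)
    moreover have "X powr (-1/(d-1)) = 2*\<epsilon>/cbar"
      unfolding X_def using d3 q2 ep assms(2) by (simp add: powr_powr q_def powr_minus_divide)
    ultimately have "2*\<epsilon>/cbar \<le> real m powr (-1/(d-1))" by simp
    hence c2: "2*\<epsilon> \<le> cbar * real m powr (-1/(d-1))" using assms(2) by (simp add: field_simps)
    define c where "c = cbar * real m powr (-1/(d-1))"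
    have c2': "2*\<epsilon> \<le> c" using c2 c_def by simp
    obtain a v b where ab: "L2_norm P (\<lambda>x. ft x - two_layer_net m a v b x)
         \<le> ennreal (C * B / sqrt (real m))"
      using upper bf m1 unfolding B_def by blast
    define r where "r = C * B / sqrt (real m)"
    have r0: "r \<ge> 0" unfolding r_def using B0 assms(3) by simp
    have low: "ennreal c \<le> L2_norm P (\<lambda>x. f x - two_layer_net m a v b x)"
      using lower m1 unfolding c_def d_def by simp
    have mf: "f \<in> borel_measurable P" using fL2 unfolding in_L2_def by simp
    obtain \<rho> where "barron_rep \<rho> ft" using bf unfolding barron_function_def by blast
    hence "ft \<in> borel_measurable borel" by (rule barron_meas)
    hence mft: "ft \<in> borel_measurable P" using measurable_cong_sets[OF sP refl] by blast
    have mnet: "two_layer_net m a v b \<in> borel_measurable P"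
      using net_meas measurable_cong_sets[OF sP refl] by blast
    let ?u = "\<lambda>x. f x - ft x" and ?v = "\<lambda>x. ft x - two_layer_net m a v b x"
    have I1: "(\<integral>\<^sup>+ x. ennreal ((?u x)\<^sup>2) \<partial>P) < ennreal (\<epsilon>\<^sup>2)" by (rule L2_lt[OF close])
    have I2: "(\<integral>\<^sup>+ x. ennreal ((?v x)\<^sup>2) \<partial>P) \<le> ennreal (r\<^sup>2)"
      by (rule L2_le[OF ab[folded r_def] r0])
    have I3: "(\<integral>\<^sup>+ x. ennreal ((?u x + ?v x)\<^sup>2) \<partial>P) \<le>
      2 * (\<integral>\<^sup>+ x. ennreal ((?u x)\<^sup>2) \<partial>P) + 2 * (\<integral>\<^sup>+ x. ennreal ((?v x)\<^sup>2) \<partial>P)"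
      by (rule L2_sum) (use mf mft mnet in auto)
    obtain A where A: "(\<integral>\<^sup>+ x. ennreal ((?u x)\<^sup>2) \<partial>P) = ennreal A" "A \<ge> 0"
      using I1 by (cases "\<integral>\<^sup>+ x. ennreal ((?u x)\<^sup>2) \<partial>P" rule: ennreal_cases) auto
    obtain Bv where Bv: "(\<integral>\<^sup>+ x. ennreal ((?v x)\<^sup>2) \<partial>P) = ennreal Bv" "Bv \<ge> 0"
      using I2 by (cases "\<integral>\<^sup>+ x. ennreal ((?v x)\<^sup>2) \<partial>P" rule: ennreal_cases) (auto simp: top_unique)
    have Alt: "A < \<epsilon>\<^sup>2" using I1 A by (simp add: ennreal_less_iff)
    have Ble: "Bv \<le> r\<^sup>2" using I2 Bv by (simp add: ennreal_le_iff)
    have "2 * (\<integral>\<^sup>+ x. ennreal ((?u x)\<^sup>2) \<partial>P) + 2 * (\<integral>\<^sup>+ x. ennreal ((?v x)\<^sup>2) \<partial>P)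
       = ennreal (2*A + 2*Bv)" using A Bv by (simp add: ennreal_plus ennreal_mult')
    also have "\<dots> < ennreal (2*\<epsilon>\<^sup>2 + 2*r\<^sup>2)"
      using Alt Ble A Bv ep by (intro ennreal_lessI) (auto simp: add_pos_nonneg)
    finally have I4: "(\<integral>\<^sup>+ x. ennreal ((f x - two_layer_net m a v b x)\<^sup>2) \<partial>P) < ennreal (2*\<epsilon>\<^sup>2 + 2*r\<^sup>2)"
      using I3 by simp
    hence "(\<integral>\<^sup>+ x. ennreal ((f x - two_layer_net m a v b x)\<^sup>2) \<partial>P) \<noteq> \<top>"
      using top.not_eq_extremum by fastforce
    from L2_ge[OF low _ this] have "ennreal (c\<^sup>2) \<le> (\<integral>\<^sup>+ x. ennreal ((f x - two_layer_net m a v b x)\<^sup>2) \<partial>P)"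
      using c2' ep by simp
    with I4 have "ennreal (c\<^sup>2) < ennreal (2*\<epsilon>\<^sup>2 + 2*r\<^sup>2)" by simp
    hence cc: "c\<^sup>2 < 2*\<epsilon>\<^sup>2 + 2*r\<^sup>2" by (metis ennreal_less_iff zero_le_power2)
    have "(2*\<epsilon>)\<^sup>2 \<le> c\<^sup>2" using c2' ep by (intro power_mono) auto
    with cc have "\<epsilon>\<^sup>2 < r\<^sup>2" by (simp add: power_mult_distrib)
    hence rep: "\<epsilon> < r" using r0 by (rule power_less_imp_less_base)
    have sm: "sqrt (real m) > 0" using m1 by simp
    have F1: "\<epsilon> * sqrt (real m) / C < B"
      using rep sm assms(3) unfolding r_def by (simp add: field_simps)
    have F2: "\<epsilon> * sqrt (X/2) / C \<le> \<epsilon> * sqrt (real m) / C"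
      using mX2 ep assms(3) by (intro divide_right_mono mult_left_mono) auto
    define t where "t = (d-1)/2"
    have sX: "sqrt (X/2) = (cbar/2) powr t * (1 / \<epsilon> powr t) / sqrt 2"
    proof -
      have "sqrt X = X powr (1/2)" using X2 by (simp add: powr_half_sqrt)
      also have "\<dots> = q powr t" unfolding X_def t_def using q2 by (simp add: powr_powr)
      also have "\<dots> = ((cbar/2)/\<epsilon>) powr t" unfolding q_def by simp
      also have "\<dots> = (cbar/2) powr t / \<epsilon> powr t"
        using ep assms(2) by (simp add: powr_divide powr_mult)
      finally show ?thesis by (simp add: real_sqrt_divide)
    qed
    have ee: "\<epsilon> * (1 / \<epsilon> powr t) = \<epsilon> powr (- (d - 3) / 2)"
    proof -
      have "- (d - 3) / 2 = 1 - t" unfolding t_def by (simp add: field_simps)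
      hence "\<epsilon> powr (- (d - 3) / 2) = \<epsilon> powr 1 / \<epsilon> powr t"
        by (simp only: powr_diff)
      thus ?thesis using ep by simp
    qed
    have alg: "\<And>a b s. s > 0 \<Longrightarrow> \<epsilon> * (a * b / s) / C = a / (s * C) * (\<epsilon> * b)"
      using assms(3) by (simp add: field_simps)
    have F3: "\<epsilon> * sqrt (X/2) / C = cd * \<epsilon> powr (- (d - 3) / 2)"
      unfolding sX cd_def ee[symmetric] t_def[symmetric] by (rule alg) simp
    have "cd * \<epsilon> powr (- (d - 3) / 2) < B" using F1 F2 F3 by linarith
    thus "barron_norm ft \<ge> cd * \<epsilon> powr (- (real DIM('a) - 3) / 2)"
      unfolding B_def d_def by simp
  qed
qed

end
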